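(* Let $\tilde\beta\in(0,1)$. Consider: (C3.1): there exist symmetric positive definite $Q^{(k)}\in\mathbb{R}^{\tilde n\times\tilde n}$, $k\in\{1,\dots,N\}$, and a symmetric positive semidefinite $Z\in\mathbb{R}^{n(n+m)\times n(n+m)}$ with $\mathrm{rank}(Z)=1$ and $S^{(k)}_{\rm lmi}(Q^{(k)},Z,\tilde\beta)\succeq0$ for all $k$; (C3.2): there exist symmetric positive definite $Q^{(k)}$ and symmetric positive semidefinite $Z$ with $\mathrm{rank}(Z)=1$ and $S^{(k)}_{\rm lmi}(Q^{(k)},Z,1)\succ0$ for all $k$; (C2.1): there exist symmetric positive definite $Q^{(k)}$, $H\in\mathbb{R}^{n\times n}$, $L\in\mathbb{R}^{m\times n}$ with $S^{(k)}_{\rm qmi}(Q^{(k)},H,L,\tilde\beta)\succeq0$ for all $k$; (C2.2): there exist symmetric positive definite $Q^{(k)}$, $H$, $L$ with $S^{(k)}_{\rm qmi}(Q^{(k)},H,L,1)\succ0$ for all $k$. Then (C3.1) is equivalent to (C2.1), and (C3.2) is equivalent to (C2.2), where $Z$ and $(H,L)$ correspond via $Z=\begin{bmatrix}\mathrm{vec}(H)\\ \mathrm{vec}(L)\end{bmatrix}\begin{bmatrix}\mathrm{vec}(H)\\ \mathrm{vec}(L)\end{bmatrix}^\top$.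
   Context: Let $n,m,N$ be positive integers, $\tilde n=n(n+1)/2$. $\mathrm{vec}$ stacks columns; $\mathrm{vech}(X)$ stacks columnwise the entries on and below the diagonal. $E_e\in\mathbb{R}^{\tilde n\times n^2}$ with $E_e\mathrm{vec}(X)=\mathrm{vech}(X)$ for all $X\in\mathbb{R}^{n\times n}$; $D\in\mathbb{R}^{n^2\times\tilde n}$ with $D\mathrm{vech}(Y)=\mathrm{vec}(Y)$ for symmetric $Y$; $\mathcal{C}(Y):=E_eYD$. Let $M^{(1)},\dots,M^{(N)}\in\mathbb{R}^{n(n+m)\times n(n+m)}$ be symmetric, with blocks $M^{(k)}_{i,j}\in\mathbb{R}^{n\times n}$ ($i,j\le n+m$). Column $n(j-1)+i$ of $F^{(k)}_{aa}\in\mathbb{R}^{n^2\times n^2}$ is $\mathrm{vec}(M^{(k)}_{i,j})$; column $m(j-1)+i'$ of $F^{(k)}_{ab}\in\mathbb{R}^{n^2\times nm}$ is $\mathrm{vec}(M^{(k)}_{n+i',j})$; column $n(j'-1)+i$ of $F^{(k)}_{ba}\in\mathbb{R}^{n^2\times nm}$ is $\mathrm{vec}(M^{(k)}_{i,n+j'})$; column $m(j'-1)+i'$ of $F^{(k)}_{bb}\in\mathbb{R}^{n^2\times m^2}$ is $\mathrm{vec}(M^{(k)}_{n+i',n+j'})$ ($i,j\le n$, $i',j'\le m$). QMI: $F^{(k)}_{\rm qmi}(L,H):=\mathcal{C}(F^{(k)}_{aa}(H\otimes H)-F^{(k)}_{ab}(H\otimes L)-F^{(k)}_{ba}(L\otimes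 H)+F^{(k)}_{bb}(L\otimes L))$, $S^{(k)}_{\rm qmi}(Q,H,L,\tilde\beta):=\begin{bmatrix}\tilde\beta^2Q & F^{(k)}_{\rm qmi}(L,H)^\top\\ F^{(k)}_{\rm qmi}(L,H) & \mathcal{C}(H\otimes H)+\mathcal{C}(H\otimes H)^\top-Q\end{bmatrix}$. LMI: for symmetric $Z\in\mathbb{R}^{n(n+m)\times n(n+m)}$, partition into $2n\times2n$ blocks $Z_{p,q}$, with block rows/columns $1..n$ of size $n$ and $n+1..2n$ of size $m$. Define $F_{hh}(Z)\in\mathbb{R}^{n^2\times n^2}$, $F_{hl}(Z),F_{lh}(Z)\in\mathbb{R}^{mn\times n^2}$, $F_{ll}(Z)\in\mathbb{R}^{m^2\times n^2}$ by: for $i,j\le n$, column $n(j-1)+i$ equals $\mathrm{vec}(Z_{i,j})$, $\mathrm{vec}(Z_{n+i,j})$, $\mathrm{vec}(Z_{i,n+j})$, $\mathrm{vec}(Z_{n+i,n+j})$ respectively. $F^{(k)}_{\rm lmi}(Z):=\mathcal{C}(F^{(k)}_{aa}F_{hh}(Z)-F^{(k)}_{ab}F_{hl}(Z)-F^{(k)}_{ba}F_{lh}(Z)+F^{(k)}_{bb}F_{ll}(Z))$ and $S^{(k)}_{\rm lmi}(Q,Z,\tilde\beta):=\begin{bmatrix}\tilde\beta^2Q & F^{(k)}_{\rm lmi}(Z)^\top\\ F^{(k)}_{\rm lmi}(Z) & \mathcal{C}(F_{hh}(Z))+\mathcal{C}(F_{hh}(Z))^\top-Q\end{bmatrix}$.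 *)

theory Defs
  imports "Jordan_Normal_Form.Matrix" "Jordan_Normal_Form.DL_Rank"
begin

text \<open>All indices below are 0-based; the paper's 1-based index n(j-1)+i becomes n*j+i.\<close>

definition tri :: "nat \<Rightarrow> nat" where "tri n = n * (n + 1) div 2"

definition vecm :: "real mat \<Rightarrow> real vec" where
  "vecm X = vec (dim_row X * dim_col X) (\<lambda>k. X $$ (k mod dim_row X, k div dim_row X))"

text \<open>Position of entry (i,j), i \<ge> j, of an n x n matrix inside vech (column-wise lower triangle).\<close>
definition vech_idx :: "nat \<Rightarrow> nat \<Rightarrow> nat \<Rightarrow> nat" where
  "vech_idx n i j = (\<Sum>c<j. n - c) + (i - j)"

definition vech :: "nat \<Rightarrow> real mat \<Rightarrow> real vec" where
  "vech n X = vec (tri n) (\<lambda>p. X $$ (THE ij. fst ij < n \<and> snd ij \<le> fst ij \<and> vech_idx n (fst ij) (snd ij) = p))"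

text \<open>Elimination matrix E_e (E_e vec X = vech X) and duplication matrix D (D vech Y = vec Y, Y symmetric).\<close>
definition Ee :: "nat \<Rightarrow> real mat" where
  "Ee n = mat (tri n) (n * n)
     (\<lambda>(p, q). if q div n \<le> q mod n \<and> p = vech_idx n (q mod n) (q div n) then 1 else 0)"

definition Dup :: "nat \<Rightarrow> real mat" where
  "Dup n = mat (n * n) (tri n)
     (\<lambda>(q, p). if p = vech_idx n (max (q mod n) (q div n)) (min (q mod n) (q div n)) then 1 else 0)"

definition Cop :: "nat \<Rightarrow> real mat \<Rightarrow> real mat" where
  "Cop n Y = Ee n * Y * Dup n"

definition kron :: "real mat \<Rightarrow> real mat \<Rightarrow> real mat" where
  "kron A B = mat (dim_row A * dim_row B) (dim_col A * dim_col B)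
     (\<lambda>(i, j). A $$ (i div dim_row B, j div dim_col B) * B $$ (i mod dim_row B, j mod dim_col B))"

definition sym_mat :: "real mat \<Rightarrow> bool" where
  "sym_mat A \<longleftrightarrow> square_mat A \<and> transpose_mat A = A"

definition psd :: "real mat \<Rightarrow> bool" where
  "psd A \<longleftrightarrow> sym_mat A \<and> (\<forall>x \<in> carrier_vec (dim_row A). scalar_prod x (A *\<^sub>v x) \<ge> 0)"

definition pd :: "real mat \<Rightarrow> bool" where
  "pd A \<longleftrightarrow> sym_mat A \<and>
     (\<forall>x \<in> carrier_vec (dim_row A). x \<noteq> 0\<^sub>v (dim_row A) \<longrightarrow> scalar_prod x (A *\<^sub>v x) > 0)"

definition mat_rank :: "real mat \<Rightarrow> nat" where
  "mat_rank A = vec_space.rank (dim_row A) A"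

definition Mblk :: "nat \<Rightarrow> real mat \<Rightarrow> nat \<Rightarrow> nat \<Rightarrow> real mat" where
  "Mblk n M i j = mat n n (\<lambda>(a, b). M $$ (n * i + a, n * j + b))"

definition Faa :: "nat \<Rightarrow> nat \<Rightarrow> real mat \<Rightarrow> real mat" where
  "Faa n m M = mat (n * n) (n * n) (\<lambda>(r, c). vecm (Mblk n M (c mod n) (c div n)) $ r)"
definition Fab :: "nat \<Rightarrow> nat \<Rightarrow> real mat \<Rightarrow> real mat" where
  "Fab n m M = mat (n * n) (n * m) (\<lambda>(r, c). vecm (Mblk n M (n + c mod m) (c div m)) $ r)"
definition Fba :: "nat \<Rightarrow> nat \<Rightarrow> real mat \<Rightarrow> real mat" where
  "Fba n m M = mat (n * n) (n * m) (\<lambda>(r, c). vecm (Mblk n M (c mod n) (n + c div n)) $ r)"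
definition Fbb :: "nat \<Rightarrow> nat \<Rightarrow> real mat \<Rightarrow> real mat" where
  "Fbb n m M = mat (n * n) (m * m) (\<lambda>(r, c). vecm (Mblk n M (n + c mod m) (n + c div m)) $ r)"

definition zoff :: "nat \<Rightarrow> nat \<Rightarrow> nat \<Rightarrow> nat" where
  "zoff n m p = (if p < n then n * p else n * n + m * (p - n))"
definition zsz :: "nat \<Rightarrow> nat \<Rightarrow> nat \<Rightarrow> nat" where
  "zsz n m p = (if p < n then n else m)"
definition Zblk :: "nat \<Rightarrow> nat \<Rightarrow> real mat \<Rightarrow> nat \<Rightarrow> nat \<Rightarrow> real mat" where
  "Zblk n m Z p q = mat (zsz n m p) (zsz n m q) (\<lambda>(a, b). Z $$ (zoff n m p + a, zoff n m q + b))"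

definition Fhh :: "nat \<Rightarrow> nat \<Rightarrow> real mat \<Rightarrow> real mat" where
  "Fhh n m Z = mat (n * n) (n * n) (\<lambda>(r, c). vecm (Zblk n m Z (c mod n) (c div n)) $ r)"
definition Fhl :: "nat \<Rightarrow> nat \<Rightarrow> real mat \<Rightarrow> real mat" where
  "Fhl n m Z = mat (m * n) (n * n) (\<lambda>(r, c). vecm (Zblk n m Z (n + c mod n) (c div n)) $ r)"
definition Flh :: "nat \<Rightarrow> nat \<Rightarrow> real mat \<Rightarrow> real mat" where
  "Flh n m Z = mat (m * n) (n * n) (\<lambda>(r, c). vecm (Zblk n m Z (c mod n) (n + c div n)) $ r)"
definition Fll :: "nat \<Rightarrow> nat \<Rightarrow> real mat \<Rightarrow> real mat" where
  "Fll n m Z = mat (m * m) (n * n) (\<lambda>(r, c). vecm (Zblk n m Z (n + c mod n) (n + c div n)) $ r)"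

definition F_qmi :: "nat \<Rightarrow> nat \<Rightarrow> real mat \<Rightarrow> real mat \<Rightarrow> real mat \<Rightarrow> real mat" where
  "F_qmi n m M L H = Cop n (Faa n m M * kron H H - Fab n m M * kron H L
      - Fba n m M * kron L H + Fbb n m M * kron L L)"

definition S_qmi :: "nat \<Rightarrow> nat \<Rightarrow> real mat \<Rightarrow> real mat \<Rightarrow> real mat \<Rightarrow> real mat \<Rightarrow> real \<Rightarrow> real mat" where
  "S_qmi n m M Q H L \<beta> = four_block_mat ((\<beta>^2) \<cdot>\<^sub>m Q) (transpose_mat (F_qmi n m M L H))
      (F_qmi n m M L H) (Cop n (kron H H) + transpose_mat (Cop n (kron H H)) - Q)"

definition F_lmi :: "nat \<Rightarrow> nat \<Rightarrow> real mat \<Rightarrow> real mat \<Rightarrow> real mat" where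
  "F_lmi n m M Z = Cop n (Faa n m M * Fhh n m Z - Fab n m M * Fhl n m Z
      - Fba n m M * Flh n m Z + Fbb n m M * Fll n m Z)"

definition S_lmi :: "nat \<Rightarrow> nat \<Rightarrow> real mat \<Rightarrow> real mat \<Rightarrow> real mat \<Rightarrow> real \<Rightarrow> real mat" where
  "S_lmi n m M Q Z \<beta> = four_block_mat ((\<beta>^2) \<cdot>\<^sub>m Q) (transpose_mat (F_lmi n m M Z))
      (F_lmi n m M Z) (Cop n (Fhh n m Z) + transpose_mat (Cop n (Fhh n m Z)) - Q)"

definition Zof :: "real mat \<Rightarrow> real mat \<Rightarrow> real mat" where
  "Zof H L = (let v = vecm H @\<^sub>v vecm L in mat (dim_vec v) (dim_vec v) (\<lambda>(i, j). v $ i * v $ j))"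

end

theory Submission
  imports Defs
begin

lemma sum_delta_mult: "i < (N::nat) \<Longrightarrow> (\<Sum>ia = 0..<N. (if ia = i then 1 else 0) * (f ia :: real)) = f i"
proof -
  assume "i < N"
  have "(\<Sum>ia = 0..<N. (if ia = i then 1 else 0) * f ia) = (\<Sum>ia = 0..<N. if ia = i then f ia else 0)"
    by (rule sum.cong) auto
  also have "\<dots> = f i" using \<open>i < N\<close> by simp
  finally show ?thesis .
qed

lemma psd_diag:
  assumes "psd A" "i < dim_row A"
  shows "A $$ (i,i) \<ge> 0"
proof -
  let ?u = "unit_vec (dim_row A) i"
  have sq: "dim_col A = dim_row A" using assms(1) unfolding psd_def sym_mat_def by auto
  have "?u \<bullet> (A *\<^sub>v ?u) \<ge> 0" using assms unfolding psd_def by auto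
  moreover have "A *\<^sub>v ?u = col A i"
    by (rule eq_vecI, insert assms sq, auto simp: mult_mat_vec_def scalar_prod_def unit_vec_def row_def col_def
        if_distrib cong: if_cong)
  moreover have "?u \<bullet> col A i = A $$ (i,i)"
    using assms sq by (simp add: scalar_prod_def unit_vec_def sum_delta_mult)
  ultimately show ?thesis by simp
qed

lemma pd_psd: assumes "pd A" shows "psd A"
  unfolding psd_def
proof (intro conjI ballI)
  show "sym_mat A" using assms unfolding pd_def by auto
  fix x :: "real vec" assume x: "x \<in> carrier_vec (dim_row A)"
  show "0 \<le> x \<bullet> (A *\<^sub>v x)"
  proof (cases "x = 0\<^sub>v (dim_row A)")
    case True
    have "A *\<^sub>v x \<in> carrier_vec (dim_row A)" unfolding carrier_vec_def by simp
    then show ?thesis using True by simp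
  next
    case False
    then show ?thesis using assms x unfolding pd_def by force
  qed
qed

lemma idx_lt: "a < (r::nat) \<Longrightarrow> i < c \<Longrightarrow> r*i + a < r*c"
proof -
  assume "a < r" "i < c"
  then have "r*i + a < r*(i+1)" by simp
  also have "\<dots> \<le> r*c" using \<open>i < c\<close> by (intro mult_le_mono2) simp
  finally show ?thesis .
qed

lemma div_lt: "(r::nat) < a * b \<Longrightarrow> r div a < b"
  by (simp add: less_mult_imp_div_less mult.commute)

lemma mod_lt: "(r::nat) < a * b \<Longrightarrow> r mod a < a"
  by (metis mod_less_divisor mult_is_0 not_gr0 not_less0)

lemma vecm_dim[simp]: "dim_vec (vecm X) = dim_row X * dim_col X"
  by (simp add: vecm_def)

lemma vecm_index: "k < dim_row X * dim_col X \<Longrightarrow> vecm X $ k = X $$ (k mod dim_row X, k div dim_row X)"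
  by (simp add: vecm_def)

lemma vecm_index2: assumes "X \<in> carrier_mat r c" "a < r" "i < c"
  shows "vecm X $ (r*i + a) = X $$ (a, i)"
proof -
  have "r*i + a < r*c" using idx_lt assms by auto
  then show ?thesis using assms by (simp add: vecm_index)
qed

definition zv :: "real mat \<Rightarrow> real mat \<Rightarrow> real vec" where
  "zv H L = vecm H @\<^sub>v vecm L"

lemma zv_dim: "H \<in> carrier_mat n n \<Longrightarrow> L \<in> carrier_mat m n \<Longrightarrow> dim_vec (zv H L) = n*(n+m)"
  by (simp add: zv_def algebra_simps)

lemma zv_H: assumes "H \<in> carrier_mat n n" "L \<in> carrier_mat m n" "a < n" "i < n"
  shows "zv H L $ (n*i + a) = H $$ (a,i)"
proof -
  have "n*i + a < n*n" using idx_lt assms by auto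
  then show ?thesis using assms vecm_index2[OF assms(1,3,4)] by (simp add: zv_def)
qed

lemma zv_L: assumes "H \<in> carrier_mat n n" "L \<in> carrier_mat m n" "a < m" "i < n"
  shows "zv H L $ (n*n + (m*i + a)) = L $$ (a,i)"
proof -
  have "m*i + a < m*n" using idx_lt assms by auto
  then show ?thesis using assms vecm_index2[OF assms(2,3,4)] by (simp add: zv_def)
qed

lemma Zof_alt: "Zof H L = mat (dim_vec (zv H L)) (dim_vec (zv H L)) (\<lambda>(i,j). zv H L $ i * zv H L $ j)"
  by (simp add: Zof_def zv_def Let_def)

lemma Zof_dim: "H \<in> carrier_mat n n \<Longrightarrow> L \<in> carrier_mat m n \<Longrightarrow> Zof H L \<in> carrier_mat (n*(n+m)) (n*(n+m))"
  by (simp add: Zof_alt zv_dim)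

lemma Zof_index: "i < dim_vec (zv H L) \<Longrightarrow> j < dim_vec (zv H L) \<Longrightarrow> Zof H L $$ (i,j) = zv H L $ i * zv H L $ j"
  by (simp add: Zof_alt)

lemma bnd1: "i < n \<Longrightarrow> a < (n::nat) \<Longrightarrow> n*i + a < n*(n+m)"
proof -
  assume "i < n" "a < n"
  then have "n*i+a < n*n" using idx_lt by auto
  also have "\<dots> \<le> n*(n+m)" by simp
  finally show ?thesis .
qed

lemma bnd2: "i < n \<Longrightarrow> a < (m::nat) \<Longrightarrow> n*n + (m*i + a) < n*(n+m)"
proof -
  assume "i < n" "a < m"
  then have "m*i+a < m*n" using idx_lt by auto
  then show ?thesis by (simp add: algebra_simps)
qed

context
  fixes n m :: nat and H L :: "real mat"
  assumes H: "H \<in> carrier_mat n n" and L: "L \<in> carrier_mat m n"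
begin

lemma ZHH: "i < n \<Longrightarrow> a < n \<Longrightarrow> j < n \<Longrightarrow> b < n \<Longrightarrow>
  Zof H L $$ (n*i + a, n*j + b) = H $$ (a,i) * H $$ (b,j)"
  using Zof_index[of "n*i+a" H L "n*j+b"] bnd1[of i n a m] bnd1[of j n b m] zv_dim[OF H L] zv_H[OF H L] by simp

lemma ZLH: "i < n \<Longrightarrow> a < m \<Longrightarrow> j < n \<Longrightarrow> b < n \<Longrightarrow>
  Zof H L $$ (n*n + (m*i + a), n*j + b) = L $$ (a,i) * H $$ (b,j)"
  using Zof_index[of "n*n + (m*i+a)" H L "n*j+b"] bnd2[of i n a m] bnd1[of j n b m] zv_dim[OF H L] zv_H[OF H L] zv_L[OF H L] by simp

lemma ZHL: "i < n \<Longrightarrow> a < n \<Longrightarrow> j < n \<Longrightarrow> b < m \<Longrightarrow>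
  Zof H L $$ (n*i + a, n*n + (m*j + b)) = H $$ (a,i) * L $$ (b,j)"
  using Zof_index[of "n*i+a" H L "n*n + (m*j+b)"] bnd1[of i n a m] bnd2[of j n b m] zv_dim[OF H L] zv_H[OF H L] zv_L[OF H L] by simp

lemma ZLL: "i < n \<Longrightarrow> a < m \<Longrightarrow> j < n \<Longrightarrow> b < m \<Longrightarrow>
  Zof H L $$ (n*n + (m*i + a), n*n + (m*j + b)) = L $$ (a,i) * L $$ (b,j)"
  using Zof_index[of "n*n + (m*i+a)" H L "n*n + (m*j+b)"] bnd2[of i n a m] bnd2[of j n b m] zv_dim[OF H L] zv_L[OF H L] by simp

lemma Fhh_Zof: "Fhh n m (Zof H L) = kron H H"
proof (rule eq_matI)
  show "dim_row (Fhh n m (Zof H L)) = dim_row (kron H H)" "dim_col (Fhh n m (Zof H L)) = dim_col (kron H H)"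
    using H by (auto simp: Fhh_def kron_def)
  fix r c assume r: "r < dim_row (kron H H)" and c: "c < dim_col (kron H H)"
  then have r': "r < n*n" and c': "c < n*n" using H by (auto simp: kron_def)
  have i: "c mod n < n" "c div n < n" "r mod n < n" "r div n < n"
    using r' c' mod_lt div_lt by blast+
  have "Fhh n m (Zof H L) $$ (r,c) = Zof H L $$ (n*(c mod n) + r mod n, n*(c div n) + r div n)"
    using r' c' i by (simp add: Fhh_def Zblk_def zsz_def zoff_def vecm_index)
  also have "\<dots> = H $$ (r mod n, c mod n) * H $$ (r div n, c div n)" using ZHH i by simp
  also have "\<dots> = kron H H $$ (r,c)" using r' c' H by (simp add: kron_def)
  finally show "Fhh n m (Zof H L) $$ (r,c) = kron H H $$ (r,c)" .
qed

lemma Fhl_Zof: "Fhl n m (Zof H L) = kron H L"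
proof (rule eq_matI)
  show "dim_row (Fhl n m (Zof H L)) = dim_row (kron H L)" "dim_col (Fhl n m (Zof H L)) = dim_col (kron H L)"
    using H L by (auto simp: Fhl_def kron_def)
  fix r c assume r: "r < dim_row (kron H L)" and c: "c < dim_col (kron H L)"
  then have r': "r < m*n" and c': "c < n*n" using H L by (auto simp: kron_def mult.commute)
  have i: "c mod n < n" "c div n < n" "r mod m < m" "r div m < n"
    using r' c' mod_lt div_lt by blast+
  have "Fhl n m (Zof H L) $$ (r,c) = Zof H L $$ (n*n + (m*(c mod n) + r mod m), n*(c div n) + r div m)"
    using r' c' i by (simp add: Fhl_def Zblk_def zsz_def zoff_def vecm_index add.assoc)
  also have "\<dots> = L $$ (r mod m, c mod n) * H $$ (r div m, c div n)" using ZLH i by simp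
  also have "\<dots> = kron H L $$ (r,c)" using r' c' H L by (simp add: kron_def mult.commute)
  finally show "Fhl n m (Zof H L) $$ (r,c) = kron H L $$ (r,c)" .
qed

lemma Flh_Zof: "Flh n m (Zof H L) = kron L H"
proof (rule eq_matI)
  show "dim_row (Flh n m (Zof H L)) = dim_row (kron L H)" "dim_col (Flh n m (Zof H L)) = dim_col (kron L H)"
    using H L by (auto simp: Flh_def kron_def)
  fix r c assume r: "r < dim_row (kron L H)" and c: "c < dim_col (kron L H)"
  then have r': "r < n*m" and c': "c < n*n" using H L by (auto simp: kron_def mult.commute)
  have i: "c mod n < n" "c div n < n" "r mod n < n" "r div n < m"
    using r' c' mod_lt div_lt by blast+
  have "Flh n m (Zof H L) $$ (r,c) = Zof H L $$ (n*(c mod n) + r mod n, n*n + (m*(c div n) + r div n))"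
    using r' c' i by (simp add: Flh_def Zblk_def zsz_def zoff_def vecm_index mult.commute add.assoc)
  also have "\<dots> = H $$ (r mod n, c mod n) * L $$ (r div n, c div n)" using ZHL i by simp
  also have "\<dots> = kron L H $$ (r,c)" using r' c' H L by (simp add: kron_def mult.commute)
  finally show "Flh n m (Zof H L) $$ (r,c) = kron L H $$ (r,c)" .
qed

lemma Fll_Zof: "Fll n m (Zof H L) = kron L L"
proof (rule eq_matI)
  show "dim_row (Fll n m (Zof H L)) = dim_row (kron L L)" "dim_col (Fll n m (Zof H L)) = dim_col (kron L L)"
    using H L by (auto simp: Fll_def kron_def)
  fix r c assume r: "r < dim_row (kron L L)" and c: "c < dim_col (kron L L)"
  then have r': "r < m*m" and c': "c < n*n" using H L by (auto simp: kron_def mult.commute)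
  have i: "c mod n < n" "c div n < n" "r mod m < m" "r div m < m"
    using r' c' mod_lt div_lt by blast+
  have "Fll n m (Zof H L) $$ (r,c) = Zof H L $$ (n*n + (m*(c mod n) + r mod m), n*n + (m*(c div n) + r div m))"
    using r' c' i by (simp add: Fll_def Zblk_def zsz_def zoff_def vecm_index add.assoc)
  also have "\<dots> = L $$ (r mod m, c mod n) * L $$ (r div m, c div n)" using ZLL i by simp
  also have "\<dots> = kron L L $$ (r,c)" using r' c' H L by (simp add: kron_def mult.commute)
  finally show "Fll n m (Zof H L) $$ (r,c) = kron L L $$ (r,c)" .
qed

lemma S_Zof: "S_lmi n m M Q (Zof H L) b = S_qmi n m M Q H L b"
  unfolding S_lmi_def S_qmi_def F_lmi_def F_qmi_def Fhh_Zof Fhl_Zof Flh_Zof Fll_Zof ..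

end

lemma lin_indpt_single:
  fixes u :: "real vec"
  assumes u: "u \<in> carrier_vec D" "u \<noteq> 0\<^sub>v D"
  shows "module.lin_indpt class_ring (module_vec TYPE(real) D) {u}"
proof
  interpret vs: vec_space "TYPE(real)" D .
  assume dep: "vs.lin_dep {u}"
  let ?B = "mat_of_cols D [u]"
  have cB: "cols ?B = [u]" using u by simp
  have Bc: "?B \<in> carrier_mat D 1" by (metis mat_of_cols_carrier(1) length_Cons list.size(3) One_nat_def)
  obtain v where v: "v \<in> carrier_vec 1" "v \<noteq> 0\<^sub>v 1" "?B *\<^sub>v v = 0\<^sub>v D"
    using vs.lin_depE[OF Bc] dep cB by auto
  have v0: "v $ 0 \<noteq> 0" using v(1,2) by (auto simp: vec_eq_iff)
  have "u = 0\<^sub>v D"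
  proof (rule eq_vecI)
    fix i assume "i < dim_vec (0\<^sub>v D :: real vec)"
    then have i: "i < D" by simp
    have "(?B *\<^sub>v v) $ i = u $ i * v $ 0"
      using i u v(1) by (simp add: mult_mat_vec_def scalar_prod_def row_def mat_of_cols_def)
    then show "u $ i = 0\<^sub>v D $ i" using v(3) v0 i by (simp add: vec_eq_iff)
  qed (use u in auto)
  then show False using u by simp
qed

lemma rank_ge1:
  fixes A :: "real mat"
  assumes A: "A \<in> carrier_mat D nc" and j: "j < nc" and cj: "col A j \<noteq> 0\<^sub>v D"
  shows "vec_space.rank D A \<ge> 1"
proof -
  interpret vs: vec_space "TYPE(real)" D .
  have "col A j \<in> set (cols A)" using A j by (auto simp: cols_def)
  moreover have "col A j \<in> carrier_vec D" using A j by auto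
  ultimately have "card {col A j} \<le> vs.rank A"
    using vs.rank_ge_card_indpt[OF A, of "{col A j}"] lin_indpt_single[of "col A j" D] cj by auto
  then show ?thesis by simp
qed

lemma rank_col_mult:
  fixes A :: "real mat"
  assumes A: "A \<in> carrier_mat D nc" and r: "vec_space.rank D A \<le> 1"
    and j: "j < nc" and k: "k < nc" and cj: "col A j \<noteq> 0\<^sub>v D"
  shows "\<exists>c. col A k = c \<cdot>\<^sub>v col A j"
proof (cases "col A k = col A j")
  case True
  then show ?thesis by (intro exI[of _ 1]) simp
next
  case False
  interpret vs: vec_space "TYPE(real)" D .
  have cjC: "col A j \<in> carrier_vec D" "col A k \<in> carrier_vec D" using A j k by auto
  have "vs.lin_dep {col A j, col A k}"
  proof (rule ccontr)
    assume "\<not> vs.lin_dep {col A j, col A k}"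
    moreover have "{col A j, col A k} \<subseteq> set (cols A)" using A j k by (auto simp: cols_def)
    ultimately have "card {col A j, col A k} \<le> vs.rank A" using vs.rank_ge_card_indpt[OF A] by blast
    then show False using False r by simp
  qed
  let ?B = "mat_of_cols D [col A j, col A k]"
  have cB: "cols ?B = [col A j, col A k]" using cjC by simp
  have Bc: "?B \<in> carrier_mat D 2" using mat_of_cols_carrier(1)[of D "[col A j, col A k]"] by (simp add: numeral_2_eq_2)
  obtain v where v: "v \<in> carrier_vec 2" "v \<noteq> 0\<^sub>v 2" "?B *\<^sub>v v = 0\<^sub>v D"
    using vs.lin_depE[OF Bc] \<open>vs.lin_dep {col A j, col A k}\<close> cB False by auto
  have ent: "col A j $ i * v $ 0 + col A k $ i * v $ 1 = 0" if i: "i < D" for i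
  proof -
    have "(?B *\<^sub>v v) $ i = col A j $ i * v $ 0 + col A k $ i * v $ 1"
      using i cjC v(1) by (simp add: mult_mat_vec_def scalar_prod_def row_def mat_of_cols_def eval_nat_numeral)
    then show ?thesis using v(3) i by simp
  qed
  have v1: "v $ 1 \<noteq> 0"
  proof
    assume "v $ 1 = 0"
    then have v0: "v $ 0 \<noteq> 0" using v(1,2) by (auto simp: vec_eq_iff less_2_cases_iff)
    have "col A j = 0\<^sub>v D"
      by (rule eq_vecI, insert ent \<open>v $ 1 = 0\<close> v0 cjC A, auto)
    then show False using cj by simp
  qed
  have "col A k = (- v $ 0 / v $ 1) \<cdot>\<^sub>v col A j"
  proof (rule eq_vecI)
    fix i assume "i < dim_vec ((- v $ 0 / v $ 1) \<cdot>\<^sub>v col A j)"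
    then have i: "i < D" using cjC A by simp
    from ent[OF i] v1 show "col A k $ i = ((- v $ 0 / v $ 1) \<cdot>\<^sub>v col A j) $ i"
      using i cjC A by (simp add: field_simps)
  qed (use cjC in simp)
  then show ?thesis by blast
qed

definition outer :: "real vec \<Rightarrow> real mat" where
  "outer w = mat (dim_vec w) (dim_vec w) (\<lambda>(i,j). w $ i * w $ j)"

lemma outer_mult: "x \<in> carrier_vec (dim_vec w) \<Longrightarrow> outer w *\<^sub>v x = (w \<bullet> x) \<cdot>\<^sub>v w"
proof (rule eq_vecI)
  fix i assume x: "x \<in> carrier_vec (dim_vec w)" and "i < dim_vec ((w \<bullet> x) \<cdot>\<^sub>v w)"
  then have i: "i < dim_vec w" by simp
  have "(outer w *\<^sub>v x) $ i = (\<Sum>j = 0..<dim_vec w. w $ i * w $ j * x $ j)"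
    using i x by (simp add: outer_def mult_mat_vec_def scalar_prod_def row_def)
  also have "\<dots> = w $ i * (\<Sum>j = 0..<dim_vec w. w $ j * x $ j)"
    by (simp add: sum_distrib_left mult.assoc)
  also have "\<dots> = ((w \<bullet> x) \<cdot>\<^sub>v w) $ i" using i x by (simp add: scalar_prod_def)
  finally show "(outer w *\<^sub>v x) $ i = ((w \<bullet> x) \<cdot>\<^sub>v w) $ i" .
qed (simp add: outer_def)

lemma psd_outer: "psd (outer w)"
  unfolding psd_def sym_mat_def
proof (intro conjI ballI)
  show "square_mat (outer w)" unfolding outer_def by simp
  show "transpose_mat (outer w) = outer w"
  proof (rule eq_matI)
    fix i j assume "i < dim_row (outer w)" "j < dim_col (outer w)"
    then have ij: "i < dim_vec w" "j < dim_vec w" unfolding outer_def by auto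
    then show "transpose_mat (outer w) $$ (i, j) = outer w $$ (i, j)"
      unfolding outer_def by simp
  qed (unfold outer_def, auto)
  fix x :: "real vec" assume "x \<in> carrier_vec (dim_row (outer w))"
  then have x: "x \<in> carrier_vec (dim_vec w)" unfolding outer_def by simp
  have wc: "w \<in> carrier_vec (dim_vec w)" by (rule carrier_vecI) simp
  have "x \<bullet> (outer w *\<^sub>v x) = (w \<bullet> x) * (x \<bullet> w)"
    unfolding outer_mult[OF x] by (rule scalar_prod_smult_right) (use x in auto)
  also have "\<dots> = (w \<bullet> x)^2" using comm_scalar_prod[OF x wc] by (simp add: power2_eq_square)
  finally show "0 \<le> x \<bullet> (outer w *\<^sub>v x)" by simp
qed

lemma rank_outer:
  assumes "p < dim_vec w" "w $ p \<noteq> 0"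
  shows "vec_space.rank (dim_vec w) (outer w) = 1"
proof -
  interpret vs: vec_space "TYPE(real)" "dim_vec w" .
  have Oc: "outer w \<in> carrier_mat (dim_vec w) (dim_vec w)" by (simp add: outer_def)
  have le: "vs.rank (outer w) \<le> 1"
    by (rule vs.rank_le_1_product_entries[OF Oc, of "\<lambda>i. w $ i" "\<lambda>i. w $ i"]) (simp add: outer_def)
  have "col (outer w) p $ p \<noteq> 0" using assms by (simp add: outer_def)
  then have "col (outer w) p \<noteq> 0\<^sub>v (dim_vec w)" using assms by auto
  then have "vs.rank (outer w) \<ge> 1" using rank_ge1[OF Oc assms(1)] by simp
  with le show ?thesis by simp
qed

lemma rank1_decomp:
  fixes Z :: "real mat"
  assumes Z: "Z \<in> carrier_mat D D" and p: "psd Z" and r: "vec_space.rank D Z = 1"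
  shows "\<exists>v. dim_vec v = D \<and> Z = outer v"
proof -
  interpret vs: vec_space "TYPE(real)" D .
  have sym: "Z $$ (a,b) = Z $$ (b,a)" if "a < D" "b < D" for a b
  proof -
    have "transpose_mat Z = Z" using p unfolding psd_def sym_mat_def by auto
    then have "transpose_mat Z $$ (a,b) = Z $$ (a,b)" by simp
    then show ?thesis using that Z by auto
  qed
  have "Z \<noteq> 0\<^sub>m D D" using r vs.rank_0I by auto
  then obtain i k where ik: "i < D" "k < D" "Z $$ (i,k) \<noteq> 0"
    using Z by (auto simp: mat_eq_iff)
  have ck: "col Z k \<noteq> 0\<^sub>v D" using ik Z by (auto simp: vec_eq_iff)
  have "\<forall>l\<in>{..<D}. \<exists>c. col Z l = c \<cdot>\<^sub>v col Z k"
    using rank_col_mult[OF Z _ ik(2) _ ck] r by auto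
  then obtain cf where cf: "\<And>l. l < D \<Longrightarrow> col Z l = cf l \<cdot>\<^sub>v col Z k"
    by (metis lessThan_iff)
  have ent: "Z $$ (a,l) = cf l * Z $$ (a,k)" if "a < D" "l < D" for a l
  proof -
    have "col Z l $ a = (cf l \<cdot>\<^sub>v col Z k) $ a" using cf[OF that(2)] by simp
    then show ?thesis using that Z ik by simp
  qed
  have dnz: "Z $$ (k,k) \<noteq> 0"
  proof
    assume "Z $$ (k,k) = 0"
    then have "Z $$ (i,k) = 0" using sym[OF ik(1,2)] ent[OF ik(2,1)] by simp
    then show False using ik by simp
  qed
  have "Z $$ (k,k) \<ge> 0" using psd_diag[OF p] ik Z by auto
  with dnz have dpos: "Z $$ (k,k) > 0" by simp
  define d where "d = Z $$ (k,k)"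
  define v where "v = vec D (\<lambda>a. Z $$ (a,k) / sqrt d)"
  have "Z = outer v"
  proof (rule eq_matI)
    fix a b assume "a < dim_row (outer v)" "b < dim_col (outer v)"
    then have ab: "a < D" "b < D" by (auto simp: outer_def v_def)
    have cb: "cf b = Z $$ (b,k) / d"
      using ent[OF ik(2) ab(2)] sym[OF ik(2) ab(2)] dpos by (simp add: d_def field_simps)
    have "Z $$ (a,b) = Z $$ (a,k) * Z $$ (b,k) / d" using ent[OF ab] cb by simp
    also have "\<dots> = (Z $$ (a,k) / sqrt d) * (Z $$ (b,k) / sqrt d)"
      using dpos by (simp add: d_def field_simps)
    also have "\<dots> = outer v $$ (a,b)" using ab by (simp add: outer_def v_def)
    finally show "Z $$ (a,b) = outer v $$ (a,b)" .
  qed (use Z in \<open>auto simp: outer_def v_def\<close>)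
  then show ?thesis by (intro exI[of _ v]) (simp add: v_def)
qed

lemma quad_unit:
  assumes "i < dim_row A" "dim_col A = dim_row A"
  shows "unit_vec (dim_row A) i \<bullet> (A *\<^sub>v unit_vec (dim_row A) i) = (A $$ (i,i) :: real)"
proof -
  let ?u = "unit_vec (dim_row A) i"
  have "A *\<^sub>v ?u = col A i"
    by (rule eq_vecI, insert assms, auto simp: mult_mat_vec_def scalar_prod_def unit_vec_def row_def col_def
        if_distrib cong: if_cong)
  moreover have "?u \<bullet> col A i = A $$ (i,i)"
    using assms by (simp add: scalar_prod_def unit_vec_def sum_delta_mult)
  ultimately show ?thesis by simp
qed

lemma pd_diag:
  assumes "pd A" "i < dim_row A"
  shows "A $$ (i,i) > 0"
proof -
  have sq: "dim_col A = dim_row A" using assms(1) unfolding pd_def sym_mat_def by auto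
  have "unit_vec (dim_row A) i \<noteq> 0\<^sub>v (dim_row A)" using assms(2) by simp
  then have "unit_vec (dim_row A) i \<bullet> (A *\<^sub>v unit_vec (dim_row A) i) > 0"
    using assms unfolding pd_def by auto
  then show ?thesis using quad_unit[OF assms(2) sq] by simp
qed

lemma tri_pos: "n > 0 \<Longrightarrow> tri n > 0"
proof -
  assume "n > 0"
  then have "2 \<le> n * (n+1)" using mult_le_mono[of 1 n 2 "n+1"] by simp
  then show ?thesis unfolding tri_def by simp
qed

lemma Zof_outer: "Zof H L = outer (zv H L)"
  by (simp add: Zof_alt outer_def)

lemma H_nonzero:
  assumes Q: "Q \<in> carrier_mat (tri n) (tri n)" "pd Q" and n: "n > 0"
    and H: "H \<in> carrier_mat n n" and S: "psd (S_qmi n m M Q H L b)"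
  shows "\<exists>a i. a < n \<and> i < n \<and> H $$ (a,i) \<noteq> 0"
proof (rule ccontr)
  assume "\<not> ?thesis"
  then have H0: "H = 0\<^sub>m n n" using H by (intro eq_matI) auto
  have K0: "kron H H = 0\<^sub>m (n*n) (n*n)" unfolding H0 by (rule eq_matI) (auto simp: kron_def mod_lt div_lt)
  have Ec: "Ee n \<in> carrier_mat (tri n) (n*n)" by (simp add: Ee_def)
  have Dc: "Dup n \<in> carrier_mat (n*n) (tri n)" by (simp add: Dup_def)
  have C0: "Cop n (kron H H) = 0\<^sub>m (tri n) (tri n)"
    unfolding Cop_def K0 using Ec Dc by simp
  let ?S = "S_qmi n m M Q H L b"
  have t: "tri n > 0" using tri_pos n by simp
  have dimS: "dim_row ?S = tri n + tri n" using Q by (simp add: S_qmi_def C0)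
  have "?S $$ (tri n, tri n) = - Q $$ (0,0)"
    using Q t by (simp add: S_qmi_def C0)
  moreover have "?S $$ (tri n, tri n) \<ge> 0" using psd_diag[OF S] dimS t by simp
  moreover have "Q $$ (0,0) > 0" using pd_diag[OF Q(2)] Q t by simp
  ultimately show False by simp
qed

lemma rank_Zof:
  assumes H: "H \<in> carrier_mat n n" and L: "L \<in> carrier_mat m n"
    and a: "a < n" "i < n" "H $$ (a,i) \<noteq> 0"
  shows "mat_rank (Zof H L) = 1"
proof -
  have p: "n*i + a < dim_vec (zv H L)" using zv_dim[OF H L] bnd1[OF a(2,1)] by simp
  have "zv H L $ (n*i+a) \<noteq> 0" using zv_H[OF H L a(1,2)] a(3) by simp
  then show ?thesis using rank_outer[OF p] unfolding mat_rank_def Zof_outer by (simp add: outer_def)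
qed

lemma decomp_Zof:
  assumes Z: "Z \<in> carrier_mat (n*(n+m)) (n*(n+m))" and p: "psd Z" and r: "mat_rank Z = 1"
  shows "\<exists>H L. H \<in> carrier_mat n n \<and> L \<in> carrier_mat m n \<and> Z = Zof H L"
proof -
  let ?D = "n*(n+m)"
  have "vec_space.rank ?D Z = 1" using r Z unfolding mat_rank_def by simp
  then obtain v where v: "dim_vec v = ?D" "Z = outer v" using rank1_decomp[OF Z p] by blast
  define H where "H = mat n n (\<lambda>(a,i). v $ (n*i + a))"
  define L where "L = mat m n (\<lambda>(a,i). v $ (n*n + (m*i + a)))"
  have Hc: "H \<in> carrier_mat n n" and Lc: "L \<in> carrier_mat m n" by (auto simp: H_def L_def)
  have "zv H L = v"
  proof (rule eq_vecI)
    show dd: "dim_vec (zv H L) = dim_vec v" using zv_dim[OF Hc Lc] v by simp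
    fix p assume "p < dim_vec v"
    then have pD: "p < n*n + m*n" using v by (simp add: algebra_simps)
    show "zv H L $ p = v $ p"
    proof (cases "p < n*n")
      case True
      have "zv H L $ p = vecm H $ p" using True pD Hc Lc by (simp add: zv_def)
      also have "\<dots> = H $$ (p mod n, p div n)" using True Hc by (simp add: vecm_index)
      also have "\<dots> = v $ (n * (p div n) + p mod n)"
        using True mod_lt[OF True] div_lt[OF True] by (simp add: H_def)
      also have "n * (p div n) + p mod n = p" by simp
      finally show ?thesis .
    next
      case False
      define q where "q = p - n*n"
      have q: "q < m * n" using pD False by (simp add: q_def)
      have "zv H L $ p = vecm L $ q" using False pD Hc Lc by (simp add: zv_def q_def)
      also have "\<dots> = L $$ (q mod m, q div m)" using q Lc by (simp add: vecm_index)
      also have "\<dots> = v $ (n*n + (m * (q div m) + q mod m))"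
        using mod_lt[OF q] div_lt[OF q] by (simp add: L_def)
      also have "n*n + (m * (q div m) + q mod m) = p" using False by (simp add: q_def)
      finally show ?thesis .
    qed
  qed
  then have "Z = Zof H L" using v by (simp add: Zof_outer)
  then show ?thesis using Hc Lc by blast
qed

theorem theorem8:
  fixes n m N :: nat and M :: "nat \<Rightarrow> real mat" and \<beta> :: real
  assumes "n > 0" and "m > 0" and "N > 0"
    and "\<And>k. k < N \<Longrightarrow> M k \<in> carrier_mat (n * (n + m)) (n * (n + m)) \<and> sym_mat (M k)"
    and "0 < \<beta>" and "\<beta> < 1"
  defines "C31 \<equiv> \<lambda>Q Z. (\<forall>k<N. Q k \<in> carrier_mat (tri n) (tri n) \<and> pd (Q k))
              \<and> Z \<in> carrier_mat (n * (n + m)) (n * (n + m)) \<and> psd Z \<and> mat_rank Z = 1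
              \<and> (\<forall>k<N. psd (S_lmi n m (M k) (Q k) Z \<beta>))"
    and "C32 \<equiv> \<lambda>Q Z. (\<forall>k<N. Q k \<in> carrier_mat (tri n) (tri n) \<and> pd (Q k))
              \<and> Z \<in> carrier_mat (n * (n + m)) (n * (n + m)) \<and> psd Z \<and> mat_rank Z = 1
              \<and> (\<forall>k<N. pd (S_lmi n m (M k) (Q k) Z 1))"
    and "C21 \<equiv> \<lambda>Q H L. (\<forall>k<N. Q k \<in> carrier_mat (tri n) (tri n) \<and> pd (Q k))
              \<and> H \<in> carrier_mat n n \<and> L \<in> carrier_mat m n
              \<and> (\<forall>k<N. psd (S_qmi n m (M k) (Q k) H L \<beta>))"
    and "C22 \<equiv> \<lambda>Q H L. (\<forall>k<N. Q k \<in> carrier_mat (tri n) (tri n) \<and> pd (Q k))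
              \<and> H \<in> carrier_mat n n \<and> L \<in> carrier_mat m n
              \<and> (\<forall>k<N. pd (S_qmi n m (M k) (Q k) H L 1))"
  shows "((\<exists>Q Z. C31 Q Z) \<longleftrightarrow> (\<exists>Q H L. C21 Q H L))
       \<and> ((\<exists>Q Z. C32 Q Z) \<longleftrightarrow> (\<exists>Q H L. C22 Q H L))
       \<and> (\<forall>Q H L. C21 Q H L \<longrightarrow> C31 Q (Zof H L))
       \<and> (\<forall>Q Z. C31 Q Z \<longrightarrow> (\<exists>H L. Z = Zof H L \<and> C21 Q H L))
       \<and> (\<forall>Q H L. C22 Q H L \<longrightarrow> C32 Q (Zof H L))
       \<and> (\<forall>Q Z. C32 Q Z \<longrightarrow> (\<exists>H L. Z = Zof H L \<and> C22 Q H L))"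
proof -
  note D = assms(7-10)
  have A1: "C31 Q (Zof H L)" if c: "C21 Q H L" for Q H L
  proof -
    have c': "(\<forall>k<N. Q k \<in> carrier_mat (tri n) (tri n) \<and> pd (Q k))" "H \<in> carrier_mat n n" "L \<in> carrier_mat m n"
      "\<forall>k<N. psd (S_qmi n m (M k) (Q k) H L \<beta>)" using c unfolding D by auto
    obtain a i where ai: "a < n" "i < n" "H $$ (a,i) \<noteq> 0"
      using H_nonzero[of "Q 0" n H m "M 0" L \<beta>] c' assms(1,3) by auto
    show ?thesis unfolding D using c' rank_Zof[OF c'(2,3) ai] Zof_dim[OF c'(2,3)] psd_outer[of "zv H L"]
      S_Zof[OF c'(2,3)] by (simp add: Zof_outer)
  qed
  have A2: "\<exists>H L. Z = Zof H L \<and> C21 Q H L" if c: "C31 Q Z" for Q Z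
  proof -
    have c': "(\<forall>k<N. Q k \<in> carrier_mat (tri n) (tri n) \<and> pd (Q k))" "Z \<in> carrier_mat (n * (n + m)) (n * (n + m))"
      "psd Z" "mat_rank Z = 1" "\<forall>k<N. psd (S_lmi n m (M k) (Q k) Z \<beta>)" using c unfolding D by auto
    obtain H L where HL: "H \<in> carrier_mat n n" "L \<in> carrier_mat m n" "Z = Zof H L"
      using decomp_Zof[OF c'(2,3,4)] by blast
    have "C21 Q H L" unfolding D using c' HL S_Zof[OF HL(1,2)] by simp
    then show ?thesis using HL by blast
  qed
  have A3: "C32 Q (Zof H L)" if c: "C22 Q H L" for Q H L
  proof -
    have c': "(\<forall>k<N. Q k \<in> carrier_mat (tri n) (tri n) \<and> pd (Q k))" "H \<in> carrier_mat n n" "L \<in> carrier_mat m n"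
      "\<forall>k<N. pd (S_qmi n m (M k) (Q k) H L 1)" using c unfolding D by auto
    obtain a i where ai: "a < n" "i < n" "H $$ (a,i) \<noteq> 0"
      using H_nonzero[of "Q 0" n H m "M 0" L 1] c' assms(1,3) pd_psd by auto
    show ?thesis unfolding D using c' rank_Zof[OF c'(2,3) ai] Zof_dim[OF c'(2,3)] psd_outer[of "zv H L"]
      S_Zof[OF c'(2,3)] by (simp add: Zof_outer)
  qed
  have A4: "\<exists>H L. Z = Zof H L \<and> C22 Q H L" if c: "C32 Q Z" for Q Z
  proof -
    have c': "(\<forall>k<N. Q k \<in> carrier_mat (tri n) (tri n) \<and> pd (Q k))" "Z \<in> carrier_mat (n * (n + m)) (n * (n + m))"
      "psd Z" "mat_rank Z = 1" "\<forall>k<N. pd (S_lmi n m (M k) (Q k) Z 1)" using c unfolding D by auto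
    obtain H L where HL: "H \<in> carrier_mat n n" "L \<in> carrier_mat m n" "Z = Zof H L"
      using decomp_Zof[OF c'(2,3,4)] by blast
    have "C22 Q H L" unfolding D using c' HL S_Zof[OF HL(1,2)] by simp
    then show ?thesis using HL by blast
  qed
  show ?thesis using A1 A2 A3 A4 by blast
qed

end
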